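(* Let $U:\mathbb R^d\times\mathcal P_2\to\mathbb R$ be such that $\partial_xU\in\mathcal C^1(\mathbb R^d\times\mathcal P_2)$, and assume $U$ is displacement monotone in the sense that for all $\xi,\eta\in\mathbb L^2$, $$(d_xd)_\xi U(\eta,\eta):=\tilde{\mathbb E}\Big[\big\langle\partial_{x\mu}U(\xi,\mathcal L_\xi,\tilde\xi)\tilde\eta,\eta\big\rangle+\big\langle\partial_{xx}U(\xi,\mathcal L_\xi)\eta,\eta\big\rangle\Big]\ge 0 .$$ Then $\partial_{xx}U(x,\mu)$ is nonnegative definite for every $(x,\mu)\in\mathbb R^d\times\mathcal P_2$.
   Context: $\mathcal P_2$ is the set of Borel probability measures on $\mathbb R^d$ with finite second moment, with the distance $W_2$. $\mathbb L^2$ denotes the set of square-integrable $\mathbb R^d$-valued random variables on a fixed atomless probability space; $\mathcal L_\xi$ is the law of $\xi$. Given $(\xi,\eta)$, $(\tilde\xi,\tilde\eta)$ denotes an independent copy of $(\xi,\eta)$ (on a product extension of the space) and $\tilde{\mathbb E}$ is the expectation under the joint law. The Wasserstein derivative $\partial_\mu$ of a function of $\mu\in\mathcal P_2$ is characterized by $U(\mathcal L_{\xi+\eta})-U(\mathcal L_\xi)=\mathbb E[\langle\partial_\mu U(\mathcal L_\xi,\xi),\eta\rangle]+o(\|\eta\|_{L^2})$ (with $\partial_\mu U(\mu,\cdot)$ in the $L^2_\mu$-closure of gradients of $C_c^\infty$ functions). $\mathcal C^1(\mathbb R^d\times\mathcal P_2)$ denotes continuous functions $F(x,\mu)$ (here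 possibly vector valued) such that $\partial_xF$ and $\partial_\mu F(x,\mu,\tilde x)$ exist and have jointly continuous extensions to $\mathbb R^d\times\mathcal P_2$, resp. $\mathbb R^d\times\mathcal P_2\times\mathbb R^d$. Notation: $\partial_{x\mu}U(x,\mu,\tilde x):=\partial_x[(\partial_\mu U(x,\mu,\tilde x))^\top]\in\mathbb R^{d\times d}$. *)

theory Defs
  imports "HOL-Probability.Probability"
begin

definition P2 :: "'a::euclidean_space measure set" where
  "P2 = {\<mu>. prob_space \<mu> \<and> sets \<mu> = sets (borel :: 'a measure) \<and>
             integrable \<mu> (\<lambda>x. (norm x)\<^sup>2)}"

definition couplings :: "'a::euclidean_space measure \<Rightarrow> 'a measure \<Rightarrow> ('a \<times> 'a) measure set" where
  "couplings \<mu> \<nu> = {\<pi>. prob_space \<pi> \<and> sets \<pi> = sets (borel :: ('a \<times> 'a) measure) \<and>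
                       distr \<pi> borel fst = \<mu> \<and> distr \<pi> borel snd = \<nu>}"

definition W2 :: "'a::euclidean_space measure \<Rightarrow> 'a measure \<Rightarrow> real" where
  "W2 \<mu> \<nu> = sqrt (enn2real (INF \<pi>\<in>couplings \<mu> \<nu>.
                      \<integral>\<^sup>+ p. ennreal ((norm (fst p - snd p))\<^sup>2) \<partial>\<pi>))"

definition atomless :: "'w measure \<Rightarrow> bool" where
  "atomless M \<longleftrightarrow> (\<forall>A\<in>sets M. 0 < measure M A \<longrightarrow>
      (\<exists>B\<in>sets M. B \<subseteq> A \<and> 0 < measure M B \<and> measure M B < measure M A))"

definition L2 :: "'w measure \<Rightarrow> ('w \<Rightarrow> 'a::euclidean_space) set" where
  "L2 M = {\<xi>. \<xi> \<in> borel_measurable M \<and> integrable M (\<lambda>\<omega>. (norm (\<xi> \<omega>))\<^sup>2)}"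

definition L2norm :: "'w measure \<Rightarrow> ('w \<Rightarrow> 'a::euclidean_space) \<Rightarrow> real" where
  "L2norm M \<eta> = sqrt (\<integral>\<omega>. (norm (\<eta> \<omega>))\<^sup>2 \<partial>M)"

definition law :: "'w measure \<Rightarrow> ('w \<Rightarrow> 'a::euclidean_space) \<Rightarrow> 'a measure" where
  "law M \<xi> = distr M borel \<xi>"

definition has_W_derivative ::
  "'w measure \<Rightarrow> ('a::euclidean_space measure \<Rightarrow> 'b::euclidean_space)
     \<Rightarrow> ('a measure \<Rightarrow> 'a \<Rightarrow> ('a \<Rightarrow>\<^sub>L 'b)) \<Rightarrow> bool" where
  "has_W_derivative M \<Phi> D \<longleftrightarrow>
     (\<forall>\<mu>\<in>P2. integrable \<mu> (\<lambda>y. (norm (D \<mu> y))\<^sup>2)) \<and>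
     (\<forall>\<xi>\<in>L2 M. \<forall>e>0. \<exists>d>0. \<forall>\<eta>\<in>L2 M. L2norm M \<eta> < d \<longrightarrow>
        norm (\<Phi> (law M (\<lambda>\<omega>. \<xi> \<omega> + \<eta> \<omega>)) - \<Phi> (law M \<xi>)
              - (\<integral>\<omega>. blinfun_apply (D (law M \<xi>) (\<xi> \<omega>)) (\<eta> \<omega>) \<partial>M))
          \<le> e * L2norm M \<eta>)"

definition cont_xP2 :: "('a::euclidean_space \<Rightarrow> 'a measure \<Rightarrow> 'b::metric_space) \<Rightarrow> bool" where
  "cont_xP2 F \<longleftrightarrow> (\<forall>x. \<forall>\<mu>\<in>P2. \<forall>e>0. \<exists>d>0. \<forall>y. \<forall>\<nu>\<in>P2.
      dist y x < d \<and> W2 \<nu> \<mu> < d \<longrightarrow> dist (F y \<nu>) (F x \<mu>) < e)"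

definition cont_xP2x :: "('a::euclidean_space \<Rightarrow> 'a measure \<Rightarrow> 'a \<Rightarrow> 'b::metric_space) \<Rightarrow> bool" where
  "cont_xP2x F \<longleftrightarrow> (\<forall>x. \<forall>\<mu>\<in>P2. \<forall>z. \<forall>e>0. \<exists>d>0. \<forall>y. \<forall>\<nu>\<in>P2. \<forall>w.
      dist y x < d \<and> W2 \<nu> \<mu> < d \<and> dist w z < d \<longrightarrow> dist (F y \<nu> w) (F x \<mu> z) < e)"

end

theory Submission imports Defs begin

lemma atomless_small:
  assumes P: "prob_space M" and at: "atomless M"
    and A: "A \<in> sets M" "0 < measure M A" and e: "0 < e"
  shows "\<exists>B\<in>sets M. B \<subseteq> A \<and> 0 < measure M B \<and> measure M B < e"
proof -
  interpret prob_space M by fact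
  have *: "\<exists>B\<in>sets M. B \<subseteq> A \<and> 0 < measure M B \<and> measure M B \<le> measure M A / 2^n" for n
  proof (induction n)
    case 0 then show ?case using A by auto
  next
    case (Suc n)
    then obtain B where B: "B \<in> sets M" "B \<subseteq> A" "0 < measure M B" "measure M B \<le> measure M A / 2^n" by blast
    then obtain C where C: "C \<in> sets M" "C \<subseteq> B" "0 < measure M C" "measure M C < measure M B"
      using at unfolding atomless_def by blast
    have d: "measure M (B - C) = measure M B - measure M C"
      using C B by (simp add: finite_measure_Diff)
    show ?case
    proof (cases "measure M C \<le> measure M B / 2")
      case True
      have "2 * measure M C * 2^n \<le> measure M B * 2^n" using True by (intro mult_right_mono) simp_all
      also have "\<dots> \<le> measure M A" using B(4) by (simp add: field_simps)
      finally have "measure M C * 2^Suc n \<le> measure M A" by (simp add: algebra_simps)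
      then have "measure M C \<le> measure M A / 2^Suc n" by (simp add: pos_le_divide_eq)
      then show ?thesis using C(1,3) C(2) B(2) by (intro bexI[of _ C]) blast+
    next
      case False
      have "2 * measure M (B - C) * 2^n \<le> measure M B * 2^n" using False d by (intro mult_right_mono) simp_all
      also have "\<dots> \<le> measure M A" using B(4) by (simp add: field_simps)
      finally have "measure M (B - C) * 2^Suc n \<le> measure M A" by (simp add: algebra_simps)
      then have "measure M (B - C) \<le> measure M A / 2^Suc n" by (simp add: pos_le_divide_eq)
      moreover have "B - C \<in> sets M" using B(1) C(1) by blast
      moreover have "0 < measure M (B - C)" using d C(4) by simp
      ultimately show ?thesis using B(2) by (intro bexI[of _ "B - C"]) blast+
    qed
  qed
  obtain n where n: "measure M A / e < 2^n"
    using real_arch_pow[of 2 "measure M A / e"] by auto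
  then have "measure M A / 2^n < e" using e by (simp add: field_simps)
  with *[of n] show ?thesis by (meson le_less_trans)
qed

lemma sierpinski:
  assumes P: "prob_space M" and at: "atomless M"
    and A: "A \<in> sets M" and t: "0 \<le> t" "t \<le> measure M A"
  shows "\<exists>B\<in>sets M. B \<subseteq> A \<and> measure M B = t"
proof -
  interpret prob_space M by fact
  define W where "W D C \<longleftrightarrow> C \<in> sets M \<and> C \<subseteq> A - D \<and> measure M D + measure M C \<le> t" for D C
  define s where "s D = Sup (measure M ` {C. W D C})" for D
  define step where "step D = (SOME C. W D C \<and> s D \<le> 2 * measure M C)" for D
  define Inv where "Inv D \<longleftrightarrow> D \<in> sets M \<and> D \<subseteq> A \<and> measure M D \<le> t" for D
  have bdd: "bdd_above (measure M ` {C. W D C})" if "Inv D" for D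
  proof -
    have "measure M C \<le> t" if "W D C" for C using that measure_nonneg[of M D] unfolding W_def by linarith
    then show ?thesis unfolding bdd_above_def by blast
  qed
  have W0: "W D {}" if "Inv D" for D using that unfolding W_def Inv_def by simp
  have sle: "measure M C \<le> s D" if "Inv D" "W D C" for D C
    unfolding s_def using bdd[OF that(1)] that(2) by (intro cSup_upper) auto
  have step_ex: "\<exists>C. W D C \<and> s D \<le> 2 * measure M C" if iD: "Inv D" for D
  proof (cases "s D \<le> 0")
    case True then show ?thesis using W0[OF that] by (intro exI[of _ "{}"]) simp
  next
    case False
    then have "s D / 2 < Sup (measure M ` {C. W D C})" unfolding s_def by simp
    then obtain y where "y \<in> measure M ` {C. W D C}" "s D / 2 < y"
      using W0[OF iD] bdd[OF iD] by (subst (asm) less_cSup_iff) auto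
    then show ?thesis by force
  qed
  have step: "W D (step D) \<and> s D \<le> 2 * measure M (step D)" if "Inv D" for D
    unfolding step_def using someI_ex[OF step_ex[OF that]] .
  define Ds where "Ds n = rec_nat {} (\<lambda>_ D. D \<union> step D) n" for n
  have Ds0: "Ds 0 = {}" and DsS: "Ds (Suc n) = Ds n \<union> step (Ds n)" for n
    unfolding Ds_def by simp_all
  have meas_un: "measure M (D \<union> step D) = measure M D + measure M (step D)" if "Inv D" for D
  proof -
    have w: "W D (step D)" using step[OF that] by simp
    then have "D \<inter> step D = {}" unfolding W_def by blast
    then show ?thesis using w that unfolding W_def Inv_def
      by (intro measure_Union) auto
  qed
  have InvDs: "Inv (Ds n)" for n
  proof (induction n)
    case 0 then show ?case unfolding Inv_def Ds0 using t by simp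
  next
    case (Suc n)
    have w: "W (Ds n) (step (Ds n))" using step[OF Suc] by simp
    show ?case unfolding DsS Inv_def
    proof (intro conjI)
      show "Ds n \<union> step (Ds n) \<in> sets M" using w Suc unfolding W_def Inv_def by blast
      show "Ds n \<union> step (Ds n) \<subseteq> A" using w Suc unfolding W_def Inv_def by blast
      show "measure M (Ds n \<union> step (Ds n)) \<le> t" using w meas_un[OF Suc] unfolding W_def by simp
    qed
  qed
  have inc: "incseq Ds" by (rule incseq_SucI) (simp add: DsS)
  have rng: "range Ds \<subseteq> sets M" using InvDs unfolding Inv_def by blast
  define D where "D = (\<Union>n. Ds n)"
  have Dsets: "D \<in> sets M" using rng unfolding D_def by blast
  have DA: "D \<subseteq> A" using InvDs unfolding D_def Inv_def by blast
  have lim: "(\<lambda>n. measure M (Ds n)) \<longlonglongrightarrow> measure M D"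
    unfolding D_def by (rule finite_Lim_measure_incseq[OF rng inc])
  have Dle: "measure M D \<le> t"
    using lim InvDs unfolding Inv_def by (intro LIMSEQ_le_const2) auto
  have Dsle: "measure M (Ds n) \<le> measure M D" for n
    using Dsets unfolding D_def by (intro finite_measure_mono) blast+
  have "measure M D = t"
  proof (rule ccontr)
    assume ne: "measure M D \<noteq> t"
    then have lt: "measure M D < t" using Dle by simp
    have "measure M (A - D) = measure M A - measure M D"
      using A Dsets DA by (simp add: finite_measure_Diff)
    then have pos: "0 < measure M (A - D)" using lt t by simp
    have AD: "A - D \<in> sets M" using A Dsets by blast
    have tD: "0 < t - measure M D" using lt by simp
    from atomless_small[OF P at AD pos tD]
    obtain C where C: "C \<in> sets M" "C \<subseteq> A - D" "0 < measure M C" "measure M C < t - measure M D"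
      by blast
    have WC: "W (Ds n) C" for n
      unfolding W_def using C Dsle[of n] unfolding D_def by auto
    have grow: "measure M (Ds n) + measure M C / 2 \<le> measure M (Ds (Suc n))" for n
    proof -
      have "measure M C \<le> s (Ds n)" using sle[OF InvDs WC] .
      also have "\<dots> \<le> 2 * measure M (step (Ds n))" using step[OF InvDs] by simp
      finally show ?thesis unfolding DsS meas_un[OF InvDs] by simp
    qed
    have lin: "real n * (measure M C / 2) \<le> measure M (Ds n)" for n
    proof (induction n)
      case 0 then show ?case by simp
    next
      case (Suc n) then show ?case using grow[of n] by (simp add: algebra_simps)
    qed
    obtain n where n: "t / (measure M C / 2) < real n" using reals_Archimedean2 by blast
    then have "t < real n * (measure M C / 2)" using C(3) by (simp add: field_simps)
    also have "\<dots> \<le> measure M (Ds n)" by (rule lin)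
    also have "\<dots> \<le> t" using InvDs unfolding Inv_def by simp
    finally show False by simp
  qed
  then show ?thesis using Dsets DA by blast
qed

lemma atomless_partition:
  assumes P: "prob_space M" and at: "atomless M" and Q: "finite Q"
  shows "A \<in> sets M \<Longrightarrow> (\<forall>c\<in>Q. 0 \<le> w c) \<Longrightarrow> sum w Q \<le> measure M A \<Longrightarrow>
    \<exists>B. (\<forall>c\<in>Q. B c \<in> sets M \<and> B c \<subseteq> A \<and> measure M (B c) = w c) \<and> disjoint_family_on B Q"
  using Q
proof (induction Q arbitrary: A rule: finite_induct)
  case empty then show ?case by (auto simp: disjoint_family_on_def)
next
  case (insert c Q)
  interpret prob_space M by fact
  have wc: "0 \<le> w c" using insert.prems by simp
  have sQ: "0 \<le> sum w Q" using insert.prems by (intro sum_nonneg) simp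
  have "w c \<le> measure M A" using insert.prems insert.hyps sQ by simp
  from sierpinski[OF P at insert.prems(1) wc this]
  obtain C where C: "C \<in> sets M" "C \<subseteq> A" "measure M C = w c" by blast
  have AC: "A - C \<in> sets M" using C insert.prems by blast
  have mAC: "measure M (A - C) = measure M A - w c"
    using C insert.prems(1) by (simp add: finite_measure_Diff)
  have "sum w Q \<le> measure M (A - C)" using mAC insert.prems insert.hyps by simp
  from insert.IH[OF AC _ this] insert.prems(2)
  obtain B where B: "\<forall>d\<in>Q. B d \<in> sets M \<and> B d \<subseteq> A - C \<and> measure M (B d) = w d"
    "disjoint_family_on B Q" by blast
  define B' where "B' = B(c := C)"
  have "B' d \<in> sets M \<and> B' d \<subseteq> A \<and> measure M (B' d) = w d" if d: "d \<in> insert c Q" for d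
  proof (cases "d = c")
    case True then show ?thesis using C unfolding B'_def by simp
  next
    case False
    then have "d \<in> Q" using d by simp
    then have "B d \<in> sets M \<and> B d \<subseteq> A - C \<and> measure M (B d) = w d" using B(1) by blast
    then show ?thesis using False unfolding B'_def by auto
  qed
  moreover have "disjoint_family_on B' (insert c Q)"
  proof (unfold disjoint_family_on_def, intro ballI impI)
    fix m n assume mn: "m \<in> insert c Q" "n \<in> insert c Q" "m \<noteq> n"
    have "B d \<subseteq> A - C" if "d \<in> Q" for d using B(1) that by blast
    moreover have "B m \<inter> B n = {}" if "m \<in> Q" "n \<in> Q" using B(2) that mn(3) unfolding disjoint_family_on_def by blast
    moreover have "c \<notin> Q" using insert.hyps by simp
    ultimately show "B' m \<inter> B' n = {}" using mn unfolding B'_def by (cases "m = c"; cases "n = c") auto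
  qed
  ultimately show ?case by (intro exI[of _ B']) blast
qed

lemma preimage_partition:
  assumes "(\<Union>j\<in>J. E j) = space M" "\<And>j \<omega>. j \<in> J \<Longrightarrow> \<omega> \<in> E j \<Longrightarrow> f \<omega> = \<phi> j"
  shows "f -` S \<inter> space M = (\<Union>j\<in>{j\<in>J. \<phi> j \<in> S}. E j)"
proof (intro equalityI subsetI)
  fix \<omega> assume "\<omega> \<in> f -` S \<inter> space M"
  then obtain j where "j \<in> J" "\<omega> \<in> E j" "f \<omega> \<in> S" using assms(1) by blast
  then show "\<omega> \<in> (\<Union>j\<in>{j\<in>J. \<phi> j \<in> S}. E j)" using assms(2) by force
next
  fix \<omega> assume "\<omega> \<in> (\<Union>j\<in>{j\<in>J. \<phi> j \<in> S}. E j)"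
  then obtain j where "j \<in> J" "\<omega> \<in> E j" "\<phi> j \<in> S" by blast
  then show "\<omega> \<in> f -` S \<inter> space M" using assms by blast
qed

lemma emeasure_distr_partition:
  assumes J: "finite J" and E: "E ` J \<subseteq> sets M" and dE: "disjoint_family_on E J"
    and U: "(\<Union>j\<in>J. E j) = space M" and fE: "\<And>j \<omega>. j \<in> J \<Longrightarrow> \<omega> \<in> E j \<Longrightarrow> f \<omega> = \<phi> j"
    and f: "f \<in> borel_measurable M" and S: "S \<in> sets borel"
  shows "emeasure (distr M borel f) S = (\<Sum>j\<in>{j\<in>J. \<phi> j \<in> S}. emeasure M (E j))"
proof -
  have "emeasure (distr M borel f) S = emeasure M (f -` S \<inter> space M)"
    by (rule emeasure_distr[OF f S])
  also have "f -` S \<inter> space M = (\<Union>j\<in>{j\<in>J. \<phi> j \<in> S}. E j)"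
    by (rule preimage_partition[OF U fE])
  also have "emeasure M \<dots> = (\<Sum>j\<in>{j\<in>J. \<phi> j \<in> S}. emeasure M (E j))"
    by (rule sum_emeasure[symmetric]) (use E dE J in \<open>auto intro: disjoint_family_on_mono\<close>)
  finally show ?thesis .
qed

lemma distr_eq_partition:
  fixes f :: "'w \<Rightarrow> 'a::euclidean_space" and g :: "'v \<Rightarrow> 'a"
  assumes J: "finite J" and E: "E ` J \<subseteq> sets M" and dE: "disjoint_family_on E J"
    and UE: "(\<Union>j\<in>J. E j) = space M" and fE: "\<And>j \<omega>. j \<in> J \<Longrightarrow> \<omega> \<in> E j \<Longrightarrow> f \<omega> = \<phi> j"
    and f: "f \<in> borel_measurable M"
    and F: "F ` J \<subseteq> sets N" and dF: "disjoint_family_on F J"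
    and UF: "(\<Union>j\<in>J. F j) = space N" and gF: "\<And>j \<omega>. j \<in> J \<Longrightarrow> \<omega> \<in> F j \<Longrightarrow> g \<omega> = \<phi> j"
    and g: "g \<in> borel_measurable N"
    and EF: "\<And>j. j \<in> J \<Longrightarrow> emeasure M (E j) = emeasure N (F j)"
  shows "distr M borel f = distr N borel g"
proof (rule measure_eqI)
  show "sets (distr M borel f) = sets (distr N borel g)" by simp
  fix S assume "S \<in> sets (distr M borel f)"
  then have S: "S \<in> sets borel" by simp
  show "emeasure (distr M borel f) S = emeasure (distr N borel g) S"
  proof -
    note e1 = emeasure_distr_partition[OF J E dE UE fE f S]
    note e2 = emeasure_distr_partition[OF J F dF UF gF g S]
    have "(\<Sum>j\<in>{j\<in>J. \<phi> j \<in> S}. emeasure M (E j)) = (\<Sum>j\<in>{j\<in>J. \<phi> j \<in> S}. emeasure N (F j))"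
      by (rule sum.cong) (simp_all add: EF)
    then show ?thesis using e1 e2 by simp
  qed
qed

definition qz :: "nat \<Rightarrow> 'a::euclidean_space \<Rightarrow> 'a" where
  "qz n y = (if norm y \<le> real n
     then (\<Sum>b\<in>Basis. (real_of_int \<lfloor>(y \<bullet> b) * real (Suc n)\<rfloor> / real (Suc n)) *\<^sub>R b) else 0)"

lemma qz_measurable[measurable]: "qz n \<in> borel_measurable borel"
  unfolding qz_def by measurable

lemma qz_finite: "finite (range (qz n :: 'a::euclidean_space \<Rightarrow> 'a))"
proof -
  define K :: int where "K = int (Suc n * n + 1)"
  define G where "G k = (\<Sum>b\<in>Basis. (real_of_int (k b) / real (Suc n)) *\<^sub>R b)" for k :: "'a \<Rightarrow> int"
  have "range (qz n :: 'a \<Rightarrow> 'a) \<subseteq> insert 0 (G ` (PiE Basis (\<lambda>_. {-K..K})))"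
  proof
    fix z assume "z \<in> range (qz n :: 'a \<Rightarrow> 'a)"
    then obtain y :: 'a where z: "z = qz n y" by blast
    show "z \<in> insert 0 (G ` (PiE Basis (\<lambda>_. {-K..K})))"
    proof (cases "norm y \<le> real n")
      case False then show ?thesis unfolding z qz_def by simp
    next
      case True
      define k where "k = restrict (\<lambda>b. \<lfloor>(y \<bullet> b) * real (Suc n)\<rfloor>) Basis"
      have kb: "k b \<in> {-K..K}" if b: "b \<in> Basis" for b
      proof -
        have a: "\<bar>y \<bullet> b\<bar> \<le> real n" using Basis_le_norm[OF b, of y] True by linarith
        have "\<bar>(y \<bullet> b) * real (Suc n)\<bar> \<le> real n * real (Suc n)"
          using a by (simp add: abs_mult mult_right_mono)
        then have r: "- (real n * real (Suc n)) \<le> (y \<bullet> b) * real (Suc n)" "(y \<bullet> b) * real (Suc n) \<le> real n * real (Suc n)"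
          by linarith+
        have f1: "real_of_int \<lfloor>(y \<bullet> b) * real (Suc n)\<rfloor> \<le> (y \<bullet> b) * real (Suc n)" by (rule of_int_floor_le)
        have f2: "(y \<bullet> b) * real (Suc n) < real_of_int \<lfloor>(y \<bullet> b) * real (Suc n)\<rfloor> + 1" by (rule real_of_int_floor_add_one_gt)
        have "real_of_int K = real n * real (Suc n) + 1" unfolding K_def by (simp add: algebra_simps)
        then have "- real_of_int K \<le> real_of_int \<lfloor>(y \<bullet> b) * real (Suc n)\<rfloor>"
             "real_of_int \<lfloor>(y \<bullet> b) * real (Suc n)\<rfloor> \<le> real_of_int K"
          using f1 f2 r by linarith+
        then show ?thesis unfolding k_def using b by simp
      qed
      have "k \<in> PiE Basis (\<lambda>_. {-K..K})" using kb unfolding k_def by (auto simp: PiE_iff)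
      moreover have "z = G k" unfolding z qz_def G_def k_def using True by simp
      ultimately show ?thesis by blast
    qed
  qed
  moreover have "finite (insert 0 (G ` (PiE Basis (\<lambda>_. {-K..K}))))"
    by (intro finite_insert[THEN iffD2] finite_imageI finite_PiE) simp_all
  ultimately show ?thesis by (rule finite_subset)
qed

lemma qz_close:
  fixes y :: "'a::euclidean_space"
  assumes "norm y \<le> real n"
  shows "norm (qz n y - y) \<le> real DIM('a) / real (Suc n)"
proof -
  define c where "c b = real_of_int \<lfloor>(y \<bullet> b) * real (Suc n)\<rfloor> / real (Suc n) - y \<bullet> b" for b :: 'a
  have cb: "\<bar>c b\<bar> \<le> 1 / real (Suc n)" for b
  proof -
    have f1: "real_of_int \<lfloor>(y \<bullet> b) * real (Suc n)\<rfloor> \<le> (y \<bullet> b) * real (Suc n)" by (rule of_int_floor_le)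
    have f2: "(y \<bullet> b) * real (Suc n) < real_of_int \<lfloor>(y \<bullet> b) * real (Suc n)\<rfloor> + 1" by (rule real_of_int_floor_add_one_gt)
    have "c b * real (Suc n) = real_of_int \<lfloor>(y \<bullet> b) * real (Suc n)\<rfloor> - (y \<bullet> b) * real (Suc n)"
      unfolding c_def by (simp add: field_simps)
    then have "\<bar>c b * real (Suc n)\<bar> \<le> 1" using f1 f2 by linarith
    then show ?thesis by (simp add: abs_mult field_simps)
  qed
  have "qz n y - y = (\<Sum>b\<in>Basis. c b *\<^sub>R b)"
    unfolding qz_def c_def using assms
    by (simp add: scaleR_diff_left sum_subtractf euclidean_representation)
  also have "norm \<dots> \<le> (\<Sum>b\<in>(Basis::'a set). norm (c b *\<^sub>R b))" by (rule norm_sum)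
  also have "\<dots> \<le> (\<Sum>b\<in>(Basis::'a set). 1 / real (Suc n))"
    by (intro sum_mono) (use cb in simp)
  also have "\<dots> = real DIM('a) / real (Suc n)" by simp
  finally show ?thesis .
qed

lemma qz_L2:
  fixes \<mu> :: "'a::euclidean_space measure"
  assumes mu: "\<mu> \<in> P2" and r: "0 < r"
  shows "\<exists>n. integrable \<mu> (\<lambda>y. (norm (qz n y - y))\<^sup>2) \<and> (\<integral>y. (norm (qz n y - y))\<^sup>2 \<partial>\<mu>) < r"
proof -
  have ps: "prob_space \<mu>" and sb: "sets \<mu> = sets (borel :: 'a measure)" and int2: "integrable \<mu> (\<lambda>x. (norm x)\<^sup>2)"
    using mu unfolding P2_def by auto
  interpret prob_space \<mu> by fact
  have meq: "borel_measurable \<mu> = borel_measurable (borel :: 'a measure)"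
    by (rule measurable_cong_sets[OF sb refl])
  define s where "s n (y::'a) = (norm (qz n y - y))\<^sup>2" for n y
  define w where "w y = real DIM('a) ^ 2 + (norm y)\<^sup>2" for y :: 'a
  have sm: "s n \<in> borel_measurable \<mu>" for n unfolding meq s_def by measurable
  have wi: "integrable \<mu> w" unfolding w_def using int2 by (intro Bochner_Integration.integrable_add) auto
  have bound: "norm (s n y) \<le> w y" for n y
  proof (cases "norm y \<le> real n")
    case True
    have a: "norm (qz n y - y) \<le> real DIM('a) / real (Suc n)" by (rule qz_close[OF True])
    have "real DIM('a) / real (Suc n) \<le> real DIM('a)" by (simp add: divide_le_eq)
    then have "norm (qz n y - y) \<le> real DIM('a)" using a by linarith
    then have "(norm (qz n y - y))\<^sup>2 \<le> real DIM('a) ^ 2" by (intro power_mono) simp_all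
    moreover have "0 \<le> (norm y)\<^sup>2" by simp
    ultimately have "(norm (qz n y - y))\<^sup>2 \<le> w y" unfolding w_def by linarith
    then show ?thesis unfolding s_def by simp
  next
    case False then show ?thesis unfolding s_def w_def qz_def by simp
  qed
  have lim: "(\<lambda>n. s n y) \<longlonglongrightarrow> 0" for y
  proof -
    have g: "(\<lambda>n. real DIM('a) * inverse (real (Suc n))) \<longlonglongrightarrow> 0"
      by (intro tendsto_mult_right_zero LIMSEQ_inverse_real_of_nat)
    obtain N :: nat where N: "norm y \<le> real N" using real_arch_simple by blast
    have ev: "eventually (\<lambda>n. norm (norm (qz n y - y)) \<le> real DIM('a) * inverse (real (Suc n))) sequentially"
    proof (rule eventually_sequentiallyI[of N])
      fix n assume "N \<le> n"
      then have "norm y \<le> real n" using N by linarith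
      then show "norm (norm (qz n y - y)) \<le> real DIM('a) * inverse (real (Suc n))"
        using qz_close[of y n] by (simp add: divide_inverse)
    qed
    have "(\<lambda>n. norm (qz n y - y)) \<longlonglongrightarrow> 0" by (rule Lim_null_comparison[OF ev g])
    then have "(\<lambda>n. (norm (qz n y - y))\<^sup>2) \<longlonglongrightarrow> 0\<^sup>2" by (intro tendsto_intros)
    then show ?thesis unfolding s_def by simp
  qed
  have conv: "(\<lambda>n. integral\<^sup>L \<mu> (s n)) \<longlonglongrightarrow> integral\<^sup>L \<mu> (\<lambda>_. 0::real)"
    by (rule integral_dominated_convergence[OF _ sm wi]) (use lim bound in auto)
  have ints: "integrable \<mu> (s n)" for n
    by (rule integrable_dominated_convergence2[where f="\<lambda>_. 0", OF _ sm wi]) (use lim bound in auto)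
  from conv have "eventually (\<lambda>n. integral\<^sup>L \<mu> (s n) < r) sequentially"
    using r by (intro order_tendstoD) simp_all
  then obtain n where "integral\<^sup>L \<mu> (s n) < r" by (auto dest: eventually_happens)
  then show ?thesis using ints[of n] unfolding s_def by blast
qed

lemma sum_indicator_point:
  assumes "finite Q" "c \<in> Q" "\<omega> \<in> B c" "disjoint_family_on B Q"
  shows "(\<Sum>d\<in>Q. indicator (B d) \<omega> *\<^sub>R (d::'a::real_vector)) = c"
proof -
  have "(\<Sum>d\<in>Q. indicator (B d) \<omega> *\<^sub>R d) = (\<Sum>d\<in>Q. (if d = c then c else 0))"
  proof (rule sum.cong)
    fix d assume d: "d \<in> Q"
    show "indicator (B d) \<omega> *\<^sub>R d = (if d = c then c else 0)"
    proof (cases "d = c")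
      case True then show ?thesis using assms(3) by simp
    next
      case False
      then have "B d \<inter> B c = {}" using assms(2,4) d unfolding disjoint_family_on_def by blast
      then have "\<omega> \<notin> B d" using assms(3) by blast
      then show ?thesis using False by simp
    qed
  qed simp
  also have "\<dots> = c" using assms(1,2) by (simp add: sum.delta)
  finally show ?thesis .
qed

lemma realize:
  fixes M :: "'w measure" and \<mu> :: "'a::euclidean_space measure" and x :: 'a
  assumes P: "prob_space M" and at: "atomless M" and mu: "\<mu> \<in> P2"
    and q: "q \<in> borel_measurable borel" and Qf: "finite (range q)" and e: "0 < \<epsilon>" "\<epsilon> < 1"
  shows "\<exists>\<xi> A. \<xi> \<in> borel_measurable M \<and> (\<exists>Bd. \<forall>\<omega>. norm (\<xi> \<omega>) \<le> Bd) \<and> A \<in> sets M \<and>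
     measure M A = \<epsilon> \<and> (\<forall>\<omega>\<in>A. \<xi> \<omega> = x) \<and>
     distr M borel \<xi> = distr (\<mu> \<Otimes>\<^sub>M M) borel (\<lambda>p. if snd p \<in> A then x else q (fst p)) \<and>
     (\<lambda>p. if snd p \<in> A then x else q (fst p)) \<in> borel_measurable (\<mu> \<Otimes>\<^sub>M M)"
proof -
  interpret M: prob_space M by fact
  have psmu: "prob_space \<mu>" and sb: "sets \<mu> = sets (borel :: 'a measure)"
    using mu unfolding P2_def by auto
  interpret mu: prob_space \<mu> by fact
  have spmu: "space \<mu> = UNIV" using sets_eq_imp_space_eq[OF sb] by simp
  define Q where "Q = range q"
  have Q: "finite Q" using Qf unfolding Q_def .
  define pre where "pre c = q -` {c}" for c
  have pre_sets: "pre c \<in> sets \<mu>" for c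
  proof -
    have "q -` {c} \<inter> space borel \<in> sets borel" by (rule measurable_sets[OF q]) simp
    then show ?thesis unfolding pre_def sb by simp
  qed
  have pre_disj: "disjoint_family_on pre Q" unfolding disjoint_family_on_def pre_def by blast
  have pre_Un: "(\<Union>c\<in>Q. pre c) = UNIV" unfolding pre_def Q_def by blast
  have sum1: "(\<Sum>c\<in>Q. measure \<mu> (pre c)) = 1"
  proof -
    have "(\<Sum>c\<in>Q. measure \<mu> (pre c)) = measure \<mu> (\<Union>c\<in>Q. pre c)"
      by (rule mu.finite_measure_finite_Union[symmetric]) (use Q pre_sets pre_disj in auto)
    also have "\<dots> = 1" unfolding pre_Un using mu.prob_space spmu by simp
    finally show ?thesis .
  qed
  define w where "w c = (1 - \<epsilon>) * measure \<mu> (pre c)" for c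
  have w0: "\<forall>c\<in>Q. 0 \<le> w c" unfolding w_def using e by simp
  have sw: "sum w Q = 1 - \<epsilon>" unfolding w_def sum_distrib_left[symmetric] sum1 by simp
  have "sum w Q \<le> measure M (space M)" using sw e M.prob_space by simp
  from atomless_partition[OF P at Q sets.top[of M] w0 this]
  obtain B where B: "\<forall>c\<in>Q. B c \<in> sets M \<and> B c \<subseteq> space M \<and> measure M (B c) = w c"
    and Bd: "disjoint_family_on B Q" by blast
  define A where "A = space M - (\<Union>c\<in>Q. B c)"
  have Bs: "B ` Q \<subseteq> sets M" using B by blast
  have UBs: "(\<Union>c\<in>Q. B c) \<in> sets M" using Bs Q by blast
  have As: "A \<in> sets M" unfolding A_def using UBs by blast
  have mUB: "measure M (\<Union>c\<in>Q. B c) = 1 - \<epsilon>"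
  proof -
    have "measure M (\<Union>c\<in>Q. B c) = (\<Sum>c\<in>Q. measure M (B c))"
      by (rule M.finite_measure_finite_Union[OF Q Bs Bd])
    also have "\<dots> = sum w Q" using B by (intro sum.cong) simp_all
    finally show ?thesis using sw by simp
  qed
  have mA: "measure M A = \<epsilon>"
    unfolding A_def using M.finite_measure_compl[OF UBs] mUB M.prob_space by simp
  define \<xi> where "\<xi> \<omega> = (if \<omega> \<in> A then x else (\<Sum>c\<in>Q. indicator (B c) \<omega> *\<^sub>R c))" for \<omega>
  have \<xi>B: "\<xi> \<omega> = c" if "c \<in> Q" "\<omega> \<in> B c" for c \<omega>
  proof -
    have "\<omega> \<notin> A" unfolding A_def using that by blast
    then show ?thesis unfolding \<xi>_def using sum_indicator_point[OF Q that Bd] by simp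
  qed
  have \<xi>m: "\<xi> \<in> borel_measurable M"
  proof -
    have "(\<lambda>\<omega>. \<Sum>c\<in>Q. indicator (B c) \<omega> *\<^sub>R c) \<in> borel_measurable M"
      using Bs by (intro borel_measurable_sum borel_measurable_scaleR borel_measurable_indicator) auto
    then show ?thesis unfolding \<xi>_def using As by (intro measurable_If_set) auto
  qed
  have bnd: "norm (\<xi> \<omega>) \<le> norm x + (\<Sum>c\<in>Q. norm c)" for \<omega>
  proof -
    have "norm (\<Sum>c\<in>Q. indicator (B c) \<omega> *\<^sub>R c) \<le> (\<Sum>c\<in>Q. norm (indicator (B c) \<omega> *\<^sub>R c))"
      by (rule norm_sum)
    also have "\<dots> \<le> (\<Sum>c\<in>Q. norm c)"
      by (intro sum_mono) (simp add: indicator_def)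
    finally have n1: "norm (\<Sum>c\<in>Q. indicator (B c) \<omega> *\<^sub>R c) \<le> (\<Sum>c\<in>Q. norm c)" .
    have n2: "0 \<le> (\<Sum>c\<in>Q. norm c)" by (intro sum_nonneg) simp
    have n3: "0 \<le> norm x" by simp
    show ?thesis
    proof (cases "\<omega> \<in> A")
      case True
      then show ?thesis using n2 by (simp add: \<xi>_def)
    next
      case False
      then have "norm (\<xi> \<omega>) = norm (\<Sum>c\<in>Q. indicator (B c) \<omega> *\<^sub>R c)" by (simp add: \<xi>_def)
      then show ?thesis using n1 n3 by linarith
    qed
  qed
  define X where "X p = (if snd p \<in> A then x else q (fst p))" for p :: "'a \<times> 'w"
  define J where "J = insert None (Some ` Q)"
  define E where "E j = (case j of None \<Rightarrow> A | Some c \<Rightarrow> B c)" for j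
  define F where "F j = (case j of None \<Rightarrow> space \<mu> \<times> A | Some c \<Rightarrow> pre c \<times> (space M - A))" for j
  define \<phi> where "\<phi> j = (case j of None \<Rightarrow> x | Some c \<Rightarrow> c)" for j
  have Xm: "X \<in> borel_measurable (\<mu> \<Otimes>\<^sub>M M)"
  proof -
    have "(\<lambda>p. q (fst p)) \<in> borel_measurable (\<mu> \<Otimes>\<^sub>M M)"
      using q by (intro measurable_compose[OF measurable_fst]) (simp add: measurable_cong_sets[OF sb refl])
    moreover have "{p \<in> space (\<mu> \<Otimes>\<^sub>M M). snd p \<in> A} \<in> sets (\<mu> \<Otimes>\<^sub>M M)"
    proof -
      have "{p \<in> space (\<mu> \<Otimes>\<^sub>M M). snd p \<in> A} = space \<mu> \<times> A"
        unfolding space_pair_measure using sets.sets_into_space[OF As] by auto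
      then show ?thesis using As by (simp add: pair_measureI)
    qed
    ultimately show ?thesis unfolding X_def
      by (intro measurable_If) auto
  qed
  have "distr M borel \<xi> = distr (\<mu> \<Otimes>\<^sub>M M) borel X"
  proof (rule distr_eq_partition[where J=J and E=E and F=F and \<phi>=\<phi>])
    show "finite J" unfolding J_def using Q by simp
    show "E ` J \<subseteq> sets M" unfolding J_def E_def using As Bs by auto
    show "disjoint_family_on E J"
      unfolding disjoint_family_on_def J_def E_def
    proof (intro ballI impI)
      fix m n assume mn: "m \<in> insert None (Some ` Q)" "n \<in> insert None (Some ` Q)" "m \<noteq> n"
      have BA: "B c \<inter> A = {}" if "c \<in> Q" for c unfolding A_def using that by blast
      show "(case m of None \<Rightarrow> A | Some c \<Rightarrow> B c) \<inter> (case n of None \<Rightarrow> A | Some c \<Rightarrow> B c) = {}"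
      proof (cases m; cases n)
        fix c d assume "m = Some c" "n = Some d"
        then show ?thesis using mn Bd unfolding disjoint_family_on_def by auto
      qed (use mn BA in auto)
    qed
    show "(\<Union>j\<in>J. E j) = space M"
      unfolding J_def E_def A_def using B by auto
    show "\<xi> \<omega> = \<phi> j" if "j \<in> J" "\<omega> \<in> E j" for j \<omega>
    proof (cases j)
      case None then show ?thesis using that unfolding E_def \<phi>_def by (simp add: \<xi>_def)
    next
      case (Some c) then show ?thesis using that \<xi>B unfolding J_def E_def \<phi>_def by auto
    qed
    show "\<xi> \<in> borel_measurable M" by (rule \<xi>m)
    show "F ` J \<subseteq> sets (\<mu> \<Otimes>\<^sub>M M)"
      unfolding J_def F_def using As pre_sets
      by (auto intro!: pair_measureI)
    show "disjoint_family_on F J"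
      unfolding disjoint_family_on_def J_def F_def
    proof (intro ballI impI)
      fix m n assume mn: "m \<in> insert None (Some ` Q)" "n \<in> insert None (Some ` Q)" "m \<noteq> n"
      show "(case m of None \<Rightarrow> space \<mu> \<times> A | Some c \<Rightarrow> pre c \<times> (space M - A)) \<inter>
            (case n of None \<Rightarrow> space \<mu> \<times> A | Some c \<Rightarrow> pre c \<times> (space M - A)) = {}"
      proof (cases m; cases n)
        fix c d assume "m = Some c" "n = Some d"
        then show ?thesis using mn pre_disj unfolding disjoint_family_on_def by auto
      qed (use mn in auto)
    qed
    show "(\<Union>j\<in>J. F j) = space (\<mu> \<Otimes>\<^sub>M M)"
    proof (intro equalityI subsetI)
      fix p assume "p \<in> (\<Union>j\<in>J. F j)"
      then show "p \<in> space (\<mu> \<Otimes>\<^sub>M M)"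
        unfolding J_def F_def space_pair_measure spmu A_def by auto
    next
      fix p assume p: "p \<in> space (\<mu> \<Otimes>\<^sub>M M)"
      obtain y \<omega> where py: "p = (y, \<omega>)" by (cases p)
      have \<omega>: "\<omega> \<in> space M" using p py unfolding space_pair_measure by simp
      show "p \<in> (\<Union>j\<in>J. F j)"
      proof (cases "\<omega> \<in> A")
        case True
        then have "p \<in> F None" unfolding F_def py spmu by simp
        then show ?thesis unfolding J_def by blast
      next
        case False
        then have "p \<in> F (Some (q y))" unfolding F_def py pre_def using \<omega> by simp
        moreover have "Some (q y) \<in> J" unfolding J_def Q_def by simp
        ultimately show ?thesis by blast
      qed
    qed
    show "X p = \<phi> j" if "j \<in> J" "p \<in> F j" for j p
      using that unfolding J_def F_def \<phi>_def X_def pre_def by (auto split: option.splits)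
    show "X \<in> borel_measurable (\<mu> \<Otimes>\<^sub>M M)" by (rule Xm)
    show "emeasure M (E j) = emeasure (\<mu> \<Otimes>\<^sub>M M) (F j)" if "j \<in> J" for j
    proof (cases j)
      case None
      have "emeasure (\<mu> \<Otimes>\<^sub>M M) (space \<mu> \<times> A) = emeasure \<mu> (space \<mu>) * emeasure M A"
        by (rule M.emeasure_pair_measure_Times[OF sets.top[of \<mu>] As])
      then show ?thesis unfolding None E_def F_def using mu.emeasure_space_1 by simp
    next
      case (Some c)
      then have c: "c \<in> Q" using that unfolding J_def by auto
      have sMA: "space M - A \<in> sets M" using As by blast
      have "emeasure (\<mu> \<Otimes>\<^sub>M M) (pre c \<times> (space M - A)) = emeasure \<mu> (pre c) * emeasure M (space M - A)"
        by (rule M.emeasure_pair_measure_Times[OF pre_sets sMA])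
      also have "\<dots> = ennreal (measure \<mu> (pre c)) * ennreal (1 - \<epsilon>)"
        using M.prob_compl[OF As] mA by (simp add: mu.emeasure_eq_measure M.emeasure_eq_measure)
      also have "\<dots> = ennreal (w c)" unfolding w_def using e by (simp add: ennreal_mult mult.commute)
      also have "\<dots> = emeasure M (B c)" using B c by (simp add: M.emeasure_eq_measure)
      finally show ?thesis unfolding Some E_def F_def by simp
    qed
  qed
  moreover have "\<forall>\<omega>\<in>A. \<xi> \<omega> = x" by (simp add: \<xi>_def)
  moreover have "\<exists>Bd. \<forall>\<omega>. norm (\<xi> \<omega>) \<le> Bd" using bnd by blast
  ultimately show ?thesis
    using \<xi>m As mA Xm unfolding X_def
    by (intro exI[of _ \<xi>] exI[of _ A]) blast
qed

lemma W2_coupling_bound: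
  assumes pi: "\<pi> \<in> couplings \<nu> \<mu>"
    and le: "(\<integral>\<^sup>+ p. ennreal ((norm (fst p - snd p))\<^sup>2) \<partial>\<pi>) \<le> ennreal r" and r: "0 \<le> r"
  shows "W2 \<nu> \<mu> \<le> sqrt r"
proof -
  have "(INF \<pi>\<in>couplings \<nu> \<mu>. \<integral>\<^sup>+ p. ennreal ((norm (fst p - snd p))\<^sup>2) \<partial>\<pi>) \<le> ennreal r"
    by (rule order_trans[OF INF_lower[OF pi, of "\<lambda>\<pi>. \<integral>\<^sup>+ p. ennreal ((norm (fst p - snd p))\<^sup>2) \<partial>\<pi>"] le])
  then have "enn2real (INF \<pi>\<in>couplings \<nu> \<mu>. \<integral>\<^sup>+ p. ennreal ((norm (fst p - snd p))\<^sup>2) \<partial>\<pi>) \<le> enn2real (ennreal r)"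
    by (rule enn2real_mono) simp
  then show ?thesis unfolding W2_def using r by (simp add: real_sqrt_le_mono)
qed

lemma sq_tri: "(norm (x - y))\<^sup>2 \<le> 2 * (norm x)\<^sup>2 + 2 * (norm (y::'a::real_normed_vector))\<^sup>2"
proof -
  have "(norm (x - y))\<^sup>2 \<le> (norm x + norm y)\<^sup>2"
    by (rule power_mono) (simp_all add: norm_triangle_ineq4)
  moreover have "0 \<le> (norm x - norm y)\<^sup>2" by simp
  ultimately show ?thesis unfolding power2_sum power2_diff by linarith
qed

lemma approx:
  fixes M :: "'w measure" and \<mu> :: "'a::euclidean_space measure" and x :: 'a
  assumes P: "prob_space M" and at: "atomless M" and mu: "\<mu> \<in> P2" and d: "0 < d" and e0: "0 < e0"
  shows "\<exists>\<xi> A. \<xi> \<in> L2 M \<and> A \<in> sets M \<and> 0 < measure M A \<and> measure M A < e0 \<and>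
     (\<forall>\<omega>\<in>A. \<xi> \<omega> = x) \<and> law M \<xi> \<in> P2 \<and> W2 (law M \<xi>) \<mu> < d"
proof -
  interpret M: prob_space M by fact
  have psmu: "prob_space \<mu>" and sb: "sets \<mu> = sets (borel :: 'a measure)" and int2: "integrable \<mu> (\<lambda>x. (norm x)\<^sup>2)"
    using mu unfolding P2_def by auto
  interpret mu: prob_space \<mu> by fact
  have meq: "borel_measurable \<mu> = borel_measurable (borel :: 'a measure)"
    by (rule measurable_cong_sets[OF sb refl])
  define a where "a y = (norm (x - y))\<^sup>2" for y
  have am: "a \<in> borel_measurable \<mu>" unfolding meq a_def by measurable
  have ai: "integrable \<mu> a"
  proof (rule Bochner_Integration.integrable_bound[OF _ am])
    show "integrable \<mu> (\<lambda>y. 2 * (norm x)\<^sup>2 + 2 * (norm y)\<^sup>2)" using int2 by simp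
    show "AE y in \<mu>. norm (a y) \<le> norm (2 * (norm x)\<^sup>2 + 2 * (norm y)\<^sup>2)"
      unfolding a_def using sq_tri[of x] by simp
  qed
  define K where "K = integral\<^sup>L \<mu> a"
  have K0: "0 \<le> K" unfolding K_def a_def by simp
  have "0 < d\<^sup>2 / 2" using d by simp
  from qz_L2[OF mu this] obtain n where
    bi: "integrable \<mu> (\<lambda>y. (norm (qz n y - y))\<^sup>2)" and bl: "(\<integral>y. (norm (qz n y - y))\<^sup>2 \<partial>\<mu>) < d\<^sup>2 / 2"
    by blast
  define b where "b y = (norm (qz n y - y))\<^sup>2" for y :: 'a
  define Bq where "Bq = integral\<^sup>L \<mu> b"
  have bm: "b \<in> borel_measurable \<mu>" unfolding meq b_def by measurable
  define \<epsilon> where "\<epsilon> = min (e0/2) (min (1/2) (d\<^sup>2 / (2 * (K + 1))))"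
  have e: "0 < \<epsilon>" "\<epsilon> < 1" "\<epsilon> < e0" unfolding \<epsilon>_def using e0 d K0 by auto
  have eK: "\<epsilon> * K < d\<^sup>2 / 2"
  proof -
    have "\<epsilon> \<le> d\<^sup>2 / (2 * (K + 1))" unfolding \<epsilon>_def by simp
    then have "\<epsilon> * K \<le> d\<^sup>2 / (2 * (K + 1)) * K" using K0 by (rule mult_right_mono)
    also have "\<dots> < d\<^sup>2 / 2"
    proof -
      have "d\<^sup>2 / (2 * (K + 1)) * K = (d\<^sup>2 / 2) * (K / (K + 1))" by (simp add: field_simps)
      also have "\<dots> < (d\<^sup>2 / 2) * 1" using K0 d by (intro mult_strict_left_mono) simp_all
      finally show ?thesis by simp
    qed
    finally show ?thesis .
  qed
  from realize[OF P at mu qz_measurable qz_finite e(1,2), of x n]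
  obtain \<xi> A where \<xi>m: "\<xi> \<in> borel_measurable M" and bnd: "\<exists>Bd. \<forall>\<omega>. norm (\<xi> \<omega>) \<le> Bd"
    and As: "A \<in> sets M" and mA: "measure M A = \<epsilon>" and \<xi>A: "\<forall>\<omega>\<in>A. \<xi> \<omega> = x"
    and law_eq: "distr M borel \<xi> = distr (\<mu> \<Otimes>\<^sub>M M) borel (\<lambda>p. if snd p \<in> A then x else qz n (fst p))"
    and Xm: "(\<lambda>p. if snd p \<in> A then x else qz n (fst p)) \<in> borel_measurable (\<mu> \<Otimes>\<^sub>M M)"
    by blast
  define X where "X p = (if snd p \<in> A then x else qz n (fst p))" for p :: "'a \<times> 'w"
  obtain Bd where Bd: "\<And>\<omega>. norm (\<xi> \<omega>) \<le> Bd" using bnd by blast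
  have sqi: "integrable M (\<lambda>\<omega>. (norm (\<xi> \<omega>))\<^sup>2)"
  proof (rule M.integrable_const_bound[where B="Bd\<^sup>2"])
    show "AE \<omega> in M. norm ((norm (\<xi> \<omega>))\<^sup>2) \<le> Bd\<^sup>2"
      using Bd by (auto intro!: power_mono)
    show "(\<lambda>\<omega>. (norm (\<xi> \<omega>))\<^sup>2) \<in> borel_measurable M" using \<xi>m by measurable
  qed
  have L2: "\<xi> \<in> L2 M" unfolding L2_def using \<xi>m sqi by simp
  have lawP2: "law M \<xi> \<in> P2"
    unfolding P2_def law_def
  proof (intro CollectI conjI)
    show "prob_space (distr M borel \<xi>)" by (rule M.prob_space_distr[OF \<xi>m])
    show "sets (distr M borel \<xi>) = sets borel" by simp
    show "integrable (distr M borel \<xi>) (\<lambda>x. (norm x)\<^sup>2)"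
      by (subst integrable_distr_eq[OF \<xi>m]) (simp_all add: sqi)
  qed
  define Pm where "Pm = \<mu> \<Otimes>\<^sub>M M"
  have PP: "prob_space Pm" unfolding Pm_def by (rule prob_space_pair[OF psmu P])
  define G where "G p = (X p, fst p)" for p
  have Gm: "G \<in> measurable Pm (borel :: ('a \<times> 'a) measure)"
  proof -
    have "G \<in> measurable Pm (borel \<Otimes>\<^sub>M borel)"
      unfolding G_def Pm_def
    proof (rule measurable_Pair)
      show "X \<in> borel_measurable (\<mu> \<Otimes>\<^sub>M M)" using Xm unfolding X_def .
      show "fst \<in> borel_measurable (\<mu> \<Otimes>\<^sub>M M)"
        using measurable_fst[of \<mu> M] unfolding measurable_cong_sets[OF refl sb] .
    qed
    then show ?thesis unfolding borel_prod .
  qed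
  have fstm: "fst \<in> measurable (borel :: ('a \<times> 'a) measure) borel"
    unfolding borel_prod[symmetric] by (rule measurable_fst)
  have sndm: "snd \<in> measurable (borel :: ('a \<times> 'a) measure) borel"
    unfolding borel_prod[symmetric] by (rule measurable_snd)
  have fstP: "distr Pm borel fst = \<mu>"
  proof -
    have "distr Pm borel fst = distr (\<mu> \<Otimes>\<^sub>M M) \<mu> fst"
      unfolding Pm_def by (rule distr_cong) (simp_all add: sb)
    also have "\<dots> = \<mu>" by (rule M.distr_pair_fst)
    finally show ?thesis .
  qed
  have "0 \<le> Bq" unfolding Bq_def b_def by simp
  define \<pi> where "\<pi> = distr Pm borel G"
  have coup: "\<pi> \<in> couplings (law M \<xi>) \<mu>"
    unfolding couplings_def
  proof (intro CollectI conjI)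
    show "prob_space \<pi>" unfolding \<pi>_def by (rule prob_space.prob_space_distr[OF PP Gm])
    show "sets \<pi> = sets borel" unfolding \<pi>_def by simp
    show "distr \<pi> borel fst = law M \<xi>"
    proof -
      have "distr \<pi> borel fst = distr Pm borel (fst \<circ> G)" unfolding \<pi>_def by (rule distr_distr[OF fstm Gm])
      also have "fst \<circ> G = X" unfolding G_def by (simp add: comp_def)
      finally show ?thesis unfolding law_def law_eq Pm_def X_def .
    qed
    show "distr \<pi> borel snd = \<mu>"
    proof -
      have "distr \<pi> borel snd = distr Pm borel (snd \<circ> G)" unfolding \<pi>_def by (rule distr_distr[OF sndm Gm])
      also have "snd \<circ> G = fst" unfolding G_def by (simp add: comp_def)
      finally show ?thesis using fstP by simp
    qed
  qed
  have cost: "(\<integral>\<^sup>+ p. ennreal ((norm (fst p - snd p))\<^sup>2) \<partial>\<pi>) \<le> ennreal (\<epsilon> * K + Bq)"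
  proof -
    have cm: "(\<lambda>p. ennreal ((norm (fst p - snd p))\<^sup>2)) \<in> borel_measurable (distr Pm borel G)"
      by (simp add: borel_prod[symmetric])
    have "(\<integral>\<^sup>+ p. ennreal ((norm (fst p - snd p))\<^sup>2) \<partial>\<pi>) = (\<integral>\<^sup>+ p. ennreal ((norm (X p - fst p))\<^sup>2) \<partial>Pm)"
      unfolding \<pi>_def by (subst nn_integral_distr[OF Gm cm]) (simp add: G_def)
    also have "\<dots> \<le> (\<integral>\<^sup>+ p. ennreal (indicator A (snd p) * a (fst p)) + ennreal (b (fst p)) \<partial>Pm)"
    proof (rule nn_integral_mono)
      fix p :: "'a \<times> 'w"
      have b0: "0 \<le> b (fst p)" unfolding b_def by simp
      have a0: "0 \<le> a (fst p)" unfolding a_def by simp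
      have "(norm (X p - fst p))\<^sup>2 \<le> indicator A (snd p) * a (fst p) + b (fst p)"
      proof (cases "snd p \<in> A")
        case True then show ?thesis using b0 unfolding X_def a_def by simp
      next
        case False then show ?thesis using a0 unfolding X_def b_def by simp
      qed
      then have "ennreal ((norm (X p - fst p))\<^sup>2) \<le> ennreal (indicator A (snd p) * a (fst p) + b (fst p))"
        by (rule ennreal_leI)
      also have "\<dots> = ennreal (indicator A (snd p) * a (fst p)) + ennreal (b (fst p))"
        using a0 b0 by (intro ennreal_plus) simp_all
      finally show "ennreal ((norm (X p - fst p))\<^sup>2) \<le> ennreal (indicator A (snd p) * a (fst p)) + ennreal (b (fst p))" .
    qed
    also have "\<dots> = (\<integral>\<^sup>+ p. ennreal (indicator A (snd p) * a (fst p)) \<partial>Pm) + (\<integral>\<^sup>+ p. ennreal (b (fst p)) \<partial>Pm)"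
    proof (rule nn_integral_add)
      have a1: "(\<lambda>p. a (fst p)) \<in> borel_measurable Pm"
        unfolding Pm_def by (rule measurable_compose[OF measurable_fst am])
      have a2: "(\<lambda>p. indicator A (snd p) :: real) \<in> borel_measurable Pm"
        unfolding Pm_def by (rule measurable_compose[OF measurable_snd borel_measurable_indicator[OF As]])
      show "(\<lambda>p. ennreal (indicator A (snd p) * a (fst p))) \<in> borel_measurable Pm"
        using a1 a2 by measurable
      have b1: "(\<lambda>p. b (fst p)) \<in> borel_measurable Pm"
        unfolding Pm_def by (rule measurable_compose[OF measurable_fst bm])
      show "(\<lambda>p. ennreal (b (fst p))) \<in> borel_measurable Pm"
        using b1 by measurable
    qed
    also have "(\<integral>\<^sup>+ p. ennreal (b (fst p)) \<partial>Pm) = ennreal Bq"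
    proof -
      have fm: "fst \<in> measurable Pm borel"
        unfolding Pm_def using measurable_fst[of \<mu> M] unfolding measurable_cong_sets[OF refl sb] .
      have "(\<integral>\<^sup>+ p. ennreal (b (fst p)) \<partial>Pm) = (\<integral>\<^sup>+ y. ennreal (b y) \<partial>(distr Pm borel fst))"
        by (rule nn_integral_distr[symmetric, OF fm]) (unfold b_def, measurable)
      also have "\<dots> = (\<integral>\<^sup>+ y. ennreal (b y) \<partial>\<mu>)" unfolding fstP ..
      also have "\<dots> = ennreal Bq" unfolding Bq_def
        by (rule nn_integral_eq_integral) (use bi in \<open>simp_all add: b_def\<close>)
      finally show ?thesis .
    qed
    also have "(\<integral>\<^sup>+ p. ennreal (indicator A (snd p) * a (fst p)) \<partial>Pm) = ennreal (\<epsilon> * K)"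
    proof -
      have fm2: "(\<lambda>p. ennreal (indicator A (snd p) * a (fst p))) \<in> borel_measurable (\<mu> \<Otimes>\<^sub>M M)"
      proof -
        have a1: "(\<lambda>p. a (fst p)) \<in> borel_measurable (\<mu> \<Otimes>\<^sub>M M)"
          by (rule measurable_compose[OF measurable_fst am])
        have a2: "(\<lambda>p. indicator A (snd p) :: real) \<in> borel_measurable (\<mu> \<Otimes>\<^sub>M M)"
          by (rule measurable_compose[OF measurable_snd borel_measurable_indicator[OF As]])
        show ?thesis using a1 a2 by measurable
      qed
      have inner: "(\<integral>\<^sup>+ \<omega>. ennreal (indicator A \<omega> * a y) \<partial>M) = ennreal (a y) * ennreal \<epsilon>" for y
      proof -
        have "(\<integral>\<^sup>+ \<omega>. ennreal (indicator A \<omega> * a y) \<partial>M) = (\<integral>\<^sup>+ \<omega>. ennreal (a y) * indicator A \<omega> \<partial>M)"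
          by (rule nn_integral_cong) (simp add: indicator_def)
        also have "\<dots> = ennreal (a y) * emeasure M A"
          using As by (simp add: nn_integral_cmult)
        also have "\<dots> = ennreal (a y) * ennreal \<epsilon>" using mA by (simp add: M.emeasure_eq_measure)
        finally show ?thesis .
      qed
      have "(\<integral>\<^sup>+ p. ennreal (indicator A (snd p) * a (fst p)) \<partial>Pm)
          = (\<integral>\<^sup>+ y. \<integral>\<^sup>+ \<omega>. ennreal (indicator A \<omega> * a y) \<partial>M \<partial>\<mu>)"
        unfolding Pm_def using M.nn_integral_fst[OF fm2] by simp
      also have "\<dots> = (\<integral>\<^sup>+ y. ennreal (a y) * ennreal \<epsilon> \<partial>\<mu>)" unfolding inner ..
      also have "\<dots> = (\<integral>\<^sup>+ y. ennreal (a y) \<partial>\<mu>) * ennreal \<epsilon>"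
        by (rule nn_integral_multc) (use am in measurable)
      also have "(\<integral>\<^sup>+ y. ennreal (a y) \<partial>\<mu>) = ennreal K" unfolding K_def
        by (rule nn_integral_eq_integral) (use ai in \<open>simp_all add: a_def[abs_def]\<close>)
      finally show ?thesis using e K0 by (simp add: ennreal_mult mult.commute)
    qed
    also have "ennreal (\<epsilon> * K) + ennreal Bq = ennreal (\<epsilon> * K + Bq)"
      using e K0 \<open>0 \<le> Bq\<close> by (intro ennreal_plus[symmetric]) simp_all
    finally show ?thesis by simp
  qed
  then have "W2 (law M \<xi>) \<mu> \<le> sqrt (\<epsilon> * K + Bq)"
    using W2_coupling_bound[OF coup cost] e K0 \<open>0 \<le> Bq\<close> by simp
  also have "\<dots> < sqrt (d\<^sup>2)"
    using eK bl unfolding Bq_def b_def by (intro real_sqrt_less_mono) simp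
  also have "\<dots> = d" using d by simp
  finally have W: "W2 (law M \<xi>) \<mu> < d" .
  show ?thesis
    using L2 As mA e \<xi>A lawP2 W by (intro exI[of _ \<xi>] exI[of _ A]) simp
qed

lemma mono_compute:
  fixes M :: "'w measure" and \<xi> :: "'w \<Rightarrow> 'a::euclidean_space"
    and DxxU :: "'a \<Rightarrow> 'a measure \<Rightarrow> ('a \<Rightarrow>\<^sub>L 'a)"
    and DxmuU :: "'a \<Rightarrow> 'a measure \<Rightarrow> 'a \<Rightarrow> ('a \<Rightarrow>\<^sub>L 'a)" and x v :: 'a
  assumes P: "prob_space M" and As: "A \<in> sets M" and \<xi>A: "\<forall>\<omega>\<in>A. \<xi> \<omega> = x"
  defines "\<eta> \<equiv> (\<lambda>\<omega>. indicator A \<omega> *\<^sub>R v)"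
  shows "(\<integral>p. blinfun_apply (DxmuU (\<xi> (fst p)) (law M \<xi>) (\<xi> (snd p))) (\<eta> (snd p)) \<bullet> \<eta> (fst p)
                 + blinfun_apply (DxxU (\<xi> (fst p)) (law M \<xi>)) (\<eta> (fst p)) \<bullet> \<eta> (fst p)
             \<partial>(M \<Otimes>\<^sub>M M))
      = (measure M A)\<^sup>2 * (blinfun_apply (DxmuU x (law M \<xi>) x) v \<bullet> v)
        + measure M A * (blinfun_apply (DxxU x (law M \<xi>)) v \<bullet> v)"
proof -
  interpret M: prob_space M by fact
  interpret MM: pair_prob_space M M by unfold_locales
  define a where "a = blinfun_apply (DxmuU x (law M \<xi>) x) v \<bullet> v"
  define b where "b = blinfun_apply (DxxU x (law M \<xi>)) v \<bullet> v"
  have AA: "A \<times> A \<in> sets (M \<Otimes>\<^sub>M M)" using As As by (rule pair_measureI)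
  have AS: "A \<times> space M \<in> sets (M \<Otimes>\<^sub>M M)" using As by (intro pair_measureI) simp_all
  have eq: "(\<integral>p. blinfun_apply (DxmuU (\<xi> (fst p)) (law M \<xi>) (\<xi> (snd p))) (\<eta> (snd p)) \<bullet> \<eta> (fst p)
                 + blinfun_apply (DxxU (\<xi> (fst p)) (law M \<xi>)) (\<eta> (fst p)) \<bullet> \<eta> (fst p)
             \<partial>(M \<Otimes>\<^sub>M M))
     = (\<integral>p. a * indicator (A \<times> A) p + b * indicator (A \<times> space M) p \<partial>(M \<Otimes>\<^sub>M M))"
  proof (rule Bochner_Integration.integral_cong[OF refl])
    fix p assume p: "p \<in> space (M \<Otimes>\<^sub>M M)"
    obtain s t where st: "p = (s, t)" by (cases p)
    have t: "t \<in> space M" using p st by (simp add: space_pair_measure)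
    show "blinfun_apply (DxmuU (\<xi> (fst p)) (law M \<xi>) (\<xi> (snd p))) (\<eta> (snd p)) \<bullet> \<eta> (fst p)
                 + blinfun_apply (DxxU (\<xi> (fst p)) (law M \<xi>)) (\<eta> (fst p)) \<bullet> \<eta> (fst p)
          = a * indicator (A \<times> A) p + b * indicator (A \<times> space M) p"
    proof (cases "s \<in> A")
      case False
      then show ?thesis unfolding st \<eta>_def by simp
    next
      case True
      then have xs: "\<xi> s = x" using \<xi>A by simp
      show ?thesis
      proof (cases "t \<in> A")
        case True
        then show ?thesis using \<open>s \<in> A\<close> xs \<xi>A t unfolding st \<eta>_def a_def b_def by simp
      next
        case False
        then show ?thesis using \<open>s \<in> A\<close> xs t unfolding st \<eta>_def a_def b_def by simp
      qed
    qed
  qed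
  have i1: "integrable (M \<Otimes>\<^sub>M M) (indicator (A \<times> A) :: _ \<Rightarrow> real)"
    using AA by (intro integrable_real_indicator) (simp_all add: less_top[symmetric])
  have i2: "integrable (M \<Otimes>\<^sub>M M) (indicator (A \<times> space M) :: _ \<Rightarrow> real)"
    using AS by (intro integrable_real_indicator) (simp_all add: less_top[symmetric])
  have m1: "measure (M \<Otimes>\<^sub>M M) (A \<times> A) = measure M A * measure M A"
  proof -
    have "emeasure (M \<Otimes>\<^sub>M M) (A \<times> A) = emeasure M A * emeasure M A"
      by (rule M.emeasure_pair_measure_Times[OF As As])
    then show ?thesis by (simp add: MM.P.emeasure_eq_measure M.emeasure_eq_measure ennreal_mult[symmetric])
  qed
  have m2: "measure (M \<Otimes>\<^sub>M M) (A \<times> space M) = measure M A"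
  proof -
    have "emeasure (M \<Otimes>\<^sub>M M) (A \<times> space M) = emeasure M A * emeasure M (space M)"
      by (rule M.emeasure_pair_measure_Times[OF As sets.top])
    then show ?thesis by (simp add: MM.P.emeasure_eq_measure M.emeasure_eq_measure M.prob_space)
  qed
  have "(\<integral>p. a * indicator (A \<times> A) p + b * indicator (A \<times> space M) p \<partial>(M \<Otimes>\<^sub>M M))
      = a * measure (M \<Otimes>\<^sub>M M) (A \<times> A) + b * measure (M \<Otimes>\<^sub>M M) (A \<times> space M)"
    using i1 i2 AA AS
    by (simp add: Bochner_Integration.integral_add Int_absorb2 sets.sets_into_space)
  then show ?thesis unfolding eq m1 m2 a_def b_def by (simp add: power2_eq_square)
qed

theorem mainTheorem2:
  fixes M :: "'w measure"
    and U :: "'a::euclidean_space \<Rightarrow> 'a measure \<Rightarrow> real"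
    and DxU :: "'a \<Rightarrow> 'a measure \<Rightarrow> 'a"
    and DxxU :: "'a \<Rightarrow> 'a measure \<Rightarrow> ('a \<Rightarrow>\<^sub>L 'a)"
    and DxmuU :: "'a \<Rightarrow> 'a measure \<Rightarrow> 'a \<Rightarrow> ('a \<Rightarrow>\<^sub>L 'a)"
  assumes prob: "prob_space M"
    and atomless: "atomless M"
    and gradx: "\<And>x \<mu>. \<mu> \<in> P2 \<Longrightarrow>
                 ((\<lambda>y. U y \<mu>) has_derivative (\<lambda>h. DxU x \<mu> \<bullet> h)) (at x)"
    and DxU_cont: "cont_xP2 DxU"
    and hessx: "\<And>x \<mu>. \<mu> \<in> P2 \<Longrightarrow>
                 ((\<lambda>y. DxU y \<mu>) has_derivative blinfun_apply (DxxU x \<mu>)) (at x)"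
    and DxxU_cont: "cont_xP2 DxxU"
    and dmu: "\<And>x. has_W_derivative M (\<lambda>\<mu>. DxU x \<mu>) (\<lambda>\<mu> z. DxmuU x \<mu> z)"
    and DxmuU_cont: "cont_xP2x DxmuU"
    and monotone: "\<And>\<xi> \<eta>. \<xi> \<in> L2 M \<Longrightarrow> \<eta> \<in> L2 M \<Longrightarrow>
        0 \<le> (\<integral>p. blinfun_apply (DxmuU (\<xi> (fst p)) (law M \<xi>) (\<xi> (snd p))) (\<eta> (snd p)) \<bullet> \<eta> (fst p)
                 + blinfun_apply (DxxU (\<xi> (fst p)) (law M \<xi>)) (\<eta> (fst p)) \<bullet> \<eta> (fst p)
             \<partial>(M \<Otimes>\<^sub>M M))"
  shows "\<forall>x. \<forall>\<mu>\<in>P2. \<forall>v. 0 \<le> blinfun_apply (DxxU x \<mu>) v \<bullet> v"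
proof (intro allI ballI)
  fix x :: 'a and \<mu> :: "'a measure" and v :: 'a
  assume mu: "\<mu> \<in> P2"
  interpret M: prob_space M by fact
  define a0 where "a0 = blinfun_apply (DxmuU x \<mu> x) v \<bullet> v"
  define b0 where "b0 = blinfun_apply (DxxU x \<mu>) v \<bullet> v"
  have diffb: "\<bar>blinfun_apply T v \<bullet> v - blinfun_apply S v \<bullet> v\<bar> \<le> dist T S * (norm v)\<^sup>2" for T S :: "'a \<Rightarrow>\<^sub>L 'a"
  proof -
    have "blinfun_apply T v \<bullet> v - blinfun_apply S v \<bullet> v = blinfun_apply (T - S) v \<bullet> v"
      by (simp add: blinfun.diff_left inner_diff_left)
    also have "\<bar>\<dots>\<bar> \<le> norm (blinfun_apply (T - S) v) * norm v" by (rule Cauchy_Schwarz_ineq2)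
    also have "\<dots> \<le> norm (T - S) * norm v * norm v"
      by (intro mult_right_mono norm_blinfun) simp
    finally show ?thesis by (simp add: dist_norm power2_eq_square mult.assoc)
  qed
  show "0 \<le> blinfun_apply (DxxU x \<mu>) v \<bullet> v"
  proof (rule ccontr)
    assume "\<not> 0 \<le> blinfun_apply (DxxU x \<mu>) v \<bullet> v"
    then have b0n: "b0 < 0" unfolding b0_def by simp
    define V where "V = (norm v)\<^sup>2"
    have V0: "0 \<le> V" unfolding V_def by simp
    define e1 where "e1 = (- b0 / 2) / (V + 1)"
    have e1: "0 < e1" unfolding e1_def using b0n V0 by (intro divide_pos_pos) simp_all
    obtain d1 where d1: "0 < d1" and c1: "\<And>\<nu>. \<nu> \<in> P2 \<Longrightarrow> W2 \<nu> \<mu> < d1 \<Longrightarrow> dist (DxxU x \<nu>) (DxxU x \<mu>) < e1"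
      using DxxU_cont mu e1 unfolding cont_xP2_def by (metis dist_self)
    obtain d2 where d2: "0 < d2" and c2: "\<And>\<nu>. \<nu> \<in> P2 \<Longrightarrow> W2 \<nu> \<mu> < d2 \<Longrightarrow> dist (DxmuU x \<nu> x) (DxmuU x \<mu> x) < 1"
      using DxmuU_cont mu unfolding cont_xP2x_def
      by (metis dist_self zero_less_one)
    define C where "C = (norm (DxmuU x \<mu> x) + 1) * V"
    have C0: "0 \<le> C" unfolding C_def using V0 by simp
    define e0 where "e0 = (- b0 / 2) / (C + 1)"
    have e0: "0 < e0" unfolding e0_def using b0n C0 by (intro divide_pos_pos) simp_all
    have d: "0 < min d1 d2" using d1 d2 by simp
    from approx[OF prob atomless mu d e0, of x]
    obtain \<xi> A where \<xi>: "\<xi> \<in> L2 M" and As: "A \<in> sets M" and mA: "0 < measure M A" "measure M A < e0"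
      and \<xi>A: "\<forall>\<omega>\<in>A. \<xi> \<omega> = x" and nu: "law M \<xi> \<in> P2" and W: "W2 (law M \<xi>) \<mu> < min d1 d2"
      by blast
    define \<nu> where "\<nu> = law M \<xi>"
    define \<eta> where "\<eta> = (\<lambda>\<omega>. indicator A \<omega> *\<^sub>R v)"
    have \<eta>m: "\<eta> \<in> borel_measurable M" unfolding \<eta>_def using As by measurable
    have \<eta>: "\<eta> \<in> L2 M"
      unfolding L2_def
    proof (intro CollectI conjI \<eta>m)
      show "integrable M (\<lambda>\<omega>. (norm (\<eta> \<omega>))\<^sup>2)"
      proof (rule M.integrable_const_bound[where B="(norm v)\<^sup>2"])
        show "AE \<omega> in M. norm ((norm (\<eta> \<omega>))\<^sup>2) \<le> (norm v)\<^sup>2"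
          unfolding \<eta>_def by (auto simp: indicator_def)
        show "(\<lambda>\<omega>. (norm (\<eta> \<omega>))\<^sup>2) \<in> borel_measurable M" using \<eta>m by measurable
      qed
    qed
    define a where "a = blinfun_apply (DxmuU x \<nu> x) v \<bullet> v"
    define b where "b = blinfun_apply (DxxU x \<nu>) v \<bullet> v"
    define m where "m = measure M A"
    have "0 \<le> m\<^sup>2 * a + m * b"
      using monotone[OF \<xi> \<eta>] mono_compute[OF prob As \<xi>A, of DxmuU v DxxU]
      unfolding \<eta>_def a_def b_def m_def \<nu>_def by simp
    then have "0 \<le> m * (m * a + b)" by (simp add: power2_eq_square algebra_simps)
    then have mab: "0 \<le> m * a + b" using mA unfolding m_def by (simp add: zero_le_mult_iff)
    have "dist (DxxU x \<nu>) (DxxU x \<mu>) < e1" using c1 nu W unfolding \<nu>_def by simp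
    then have "\<bar>b - b0\<bar> \<le> e1 * V" unfolding b_def b0_def V_def
      using diffb[of "DxxU x \<nu>" "DxxU x \<mu>"] V0
      by (smt (verit, best) V_def mult_right_mono)
    also have "e1 * V \<le> - b0 / 2"
    proof -
      have "e1 * V = (- b0 / 2) * (V / (V + 1))" unfolding e1_def by (simp add: field_simps)
      also have "\<dots> \<le> (- b0 / 2) * 1" using b0n V0 by (intro mult_left_mono) simp_all
      finally show ?thesis by simp
    qed
    finally have bb: "b \<le> b0 / 2" by linarith
    have "dist (DxmuU x \<nu> x) (DxmuU x \<mu> x) < 1" using c2 nu W unfolding \<nu>_def by simp
    then have "norm (DxmuU x \<nu> x) \<le> norm (DxmuU x \<mu> x) + 1"
      using norm_triangle_ineq2[of "DxmuU x \<nu> x" "DxmuU x \<mu> x"] unfolding dist_norm by linarith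
    moreover have "\<bar>a\<bar> \<le> norm (DxmuU x \<nu> x) * V"
    proof -
      have "\<bar>a\<bar> \<le> norm (blinfun_apply (DxmuU x \<nu> x) v) * norm v" unfolding a_def by (rule Cauchy_Schwarz_ineq2)
      also have "\<dots> \<le> norm (DxmuU x \<nu> x) * norm v * norm v"
        by (intro mult_right_mono norm_blinfun) simp
      finally show ?thesis unfolding V_def by (simp add: power2_eq_square mult.assoc)
    qed
    ultimately have aC: "\<bar>a\<bar> \<le> C" unfolding C_def using V0
      by (smt (verit, best) mult_right_mono)
    have "m * a \<le> m * C" using aC mA unfolding m_def by (intro mult_left_mono) simp_all
    also have "\<dots> \<le> e0 * C" using mA C0 unfolding m_def by (intro mult_right_mono) simp_all
    also have "\<dots> < - b0 / 2"
    proof -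
      have "e0 * C = (- b0 / 2) * (C / (C + 1))" unfolding e0_def by (simp add: field_simps)
      also have "\<dots> < (- b0 / 2) * 1" using b0n C0 by (intro mult_strict_left_mono) simp_all
      finally show ?thesis by simp
    qed
    finally show False using mab bb by linarith
  qed
qed

end
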